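(* Let $d\ge1$ and $L\ge2$ be integers and $W_1,\dots,W_L\in\mathbb{R}^{d\times d}$. Let $\alpha=\max\{\max_{1\le l\le L-1}\|W_l\|_2,\,1\}$, $\beta=\|W_L\|_2$, and $\phi=\max\{\|W_{L:1}\|_2,\,e/\sqrt{L},\,1\}$. Let $D_l=W_{l+1}^\intercal W_{l+1}-W_lW_l^\intercal$ for $l=1,\dots,L-1$, and suppose $\|D_l\|_2\le\delta$ for $l=1,\dots,L-2$ and $\|I+D_{L-1}\|_2\le\varepsilon$, where $\delta\le(2L^3\phi^2)^{-1}$ and $\varepsilon\le(4L^2)^{-1}$. Then $$\alpha^{2(L-1)}<L\phi^2\qquad\text{and}\qquad\alpha^{2(L-1)}\beta^2<2\phi^2.$$
   Context: $W_{L:1}=W_LW_{L-1}\cdots W_1$. $\|\cdot\|_2$ is the spectral norm; $e$ is Euler's number. *)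

theory Defs
  imports "HOL-Analysis.Analysis"
begin

definition spec_norm :: "real^'n^'n \<Rightarrow> real" where
  "spec_norm A = onorm (\<lambda>x. A *v x)"

fun prod_mats :: "(nat \<Rightarrow> real^'n^'n) \<Rightarrow> nat \<Rightarrow> real^'n^'n" where
  "prod_mats W 0 = mat 1"
| "prod_mats W (Suc k) = W (Suc k) ** prod_mats W k"

end

theory Submission
  imports Defs
begin


lemma sn_bound: "norm (A *v x) \<le> spec_norm A * norm x"
  unfolding spec_norm_def by (rule onorm) simp

lemma sn_nonneg: "0 \<le> spec_norm A"
  unfolding spec_norm_def by (rule onorm_pos_le) simp

lemma sn_le: "(\<And>x. norm (A *v x) \<le> b * norm x) \<Longrightarrow> spec_norm (A::real^'n^'n) \<le> b"
  unfolding spec_norm_def by (rule onorm_le)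

lemma dot_transp: "inner u ((A::real^'n^'n) *v v) = inner (transpose A *v u) v"
  by (metis dot_lmul_matrix transpose_matrix_vector)

lemma quad_TA: "inner x ((transpose A ** A) *v x) = (norm ((A::real^'n^'n) *v x))^2"
  by (metis dot_transp matrix_vector_mul_assoc power2_norm_eq_inner transpose_transpose inner_commute)

lemma quad_AT: "inner x ((A ** transpose A) *v x) = (norm (transpose (A::real^'n^'n) *v x))^2"
  using quad_TA[of x "transpose A"] by simp

lemma quad_bound: "\<bar>inner x (M *v x)\<bar> \<le> spec_norm M * (norm x)^2"
proof -
  have "\<bar>inner x (M *v x)\<bar> \<le> norm x * norm (M *v x)" by (rule Cauchy_Schwarz_ineq2)
  also have "\<dots> \<le> norm x * (spec_norm M * norm x)" by (simp add: mult_left_mono sn_bound)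
  finally show ?thesis by (simp add: power2_eq_square algebra_simps)
qed

lemma sn_transp_le: "spec_norm (transpose (A::real^'n^'n)) \<le> spec_norm A"
proof (rule sn_le)
  fix x
  have "(norm (transpose A *v x))^2 = inner x ((A ** transpose A) *v x)" by (simp add: quad_AT)
  also have "\<dots> = inner (transpose A *v x) (transpose A *v x)"
    by (metis dot_transp matrix_vector_mul_assoc power2_norm_eq_inner quad_AT)
  also have "\<dots> = inner x (A *v (transpose A *v x))" by (metis dot_transp transpose_transpose inner_commute)
  also have "\<dots> \<le> norm x * norm (A *v (transpose A *v x))" by (rule Cauchy_Schwarz_ineq2[THEN abs_le_D1])
  also have "\<dots> \<le> norm x * (spec_norm A * norm (transpose A *v x))" by (simp add: mult_left_mono sn_bound)
  finally have h: "(norm (transpose A *v x))^2 \<le> norm x * (spec_norm A * norm (transpose A *v x))" .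
  show "norm (transpose A *v x) \<le> spec_norm A * norm x"
  proof (cases "norm (transpose A *v x) = 0")
    case True thus ?thesis using sn_nonneg[of A] by simp
  next
    case False
    then have p: "norm (transpose A *v x) > 0" by simp
    from h have "norm (transpose A *v x) * norm (transpose A *v x) \<le> (spec_norm A * norm x) * norm (transpose A *v x)"
      by (simp add: power2_eq_square algebra_simps)
    thus ?thesis using p by simp
  qed
qed

lemma sn_transp: "spec_norm (transpose (A::real^'n^'n)) = spec_norm A"
  using sn_transp_le[of A] sn_transp_le[of "transpose A"] by simp

lemma sn_attained: "\<exists>x::real^'n. norm x = 1 \<and> norm ((A::real^'n^'n) *v x) = spec_norm A"
proof -
  have c: "compact (sphere (0::real^'n) 1)" by simp
  have ne: "sphere (0::real^'n) 1 \<noteq> {}" proof -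
    have "(axis undefined 1 :: real^'n) \<in> sphere 0 1" by simp
    thus ?thesis by blast
  qed
  have ct: "continuous_on (sphere 0 1) (\<lambda>x. norm (A *v x))"
    by (intro continuous_intros linear_continuous_on) simp
  obtain x0 where x0: "x0 \<in> sphere 0 1" and mx: "\<And>y. y \<in> sphere 0 1 \<Longrightarrow> norm (A *v y) \<le> norm (A *v x0)"
    using continuous_attains_sup[OF c ne ct] by blast
  have n1: "norm x0 = 1" using x0 by simp
  have "spec_norm A \<le> norm (A *v x0)"
  proof (rule sn_le)
    fix y :: "real^'n"
    show "norm (A *v y) \<le> norm (A *v x0) * norm y"
    proof (cases "y = 0")
      case True thus ?thesis by simp
    next
      case False
      let ?u = "(1/norm y) *\<^sub>R y"
      have "?u \<in> sphere 0 1" using False by simp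
      hence "norm (A *v ?u) \<le> norm (A *v x0)" by (rule mx)
      moreover have "A *v ?u = (1/norm y) *\<^sub>R (A *v y)" by (simp add: matrix_vector_mult_scaleR)
      ultimately have "norm (A *v y) / norm y \<le> norm (A *v x0)" by simp
      thus ?thesis using False by (simp add: divide_le_eq mult.commute)
    qed
  qed
  moreover have "norm (A *v x0) \<le> spec_norm A" using sn_bound[of A x0] n1 by simp
  ultimately show ?thesis using n1 by (intro exI[of _ x0]) simp
qed



lemma pow_exp: "0 \<le> 1 + x \<Longrightarrow> (1 + x::real)^n \<le> exp (real n * x)"
proof -
  assume "0 \<le> 1 + x"
  hence "(1+x)^n \<le> (exp x)^n" by (intro power_mono) (simp_all add: exp_ge_add_one_self add.commute)
  thus ?thesis by (simp add: exp_of_nat_mult)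
qed

lemma scalar_part:
  fixes L :: nat and b c phi2 a2 :: real
  assumes hL: "L \<ge> 2" and hb: "b \<ge> 0" and hc0: "0 \<le> c" and hc: "c \<le> 3 / (4 * real L ^ 2)"
    and hp1: "phi2 \<ge> 1" and hpe: "exp 2 \<le> real L * phi2"
    and ha0: "0 \<le> a2" and ha: "a2 \<le> 1 + b + c"
    and hlow: "b * (1 + b - c)^(L-1) \<le> phi2"
  shows "a2^(L-1) < real L * phi2 \<and> a2^(L-1) * b < 2 * phi2"
proof -
  define n where "n = L - 1"
  define l where "l = real L"
  have ln: "l = real n + 1" using hL unfolding n_def l_def by simp
  have l2: "l \<ge> 2" using hL unfolding l_def by simp
  have hc': "c \<le> 3 / (4 * l^2)" using hc unfolding l_def .
  have c16: "c \<le> 3/16"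
  proof -
    have "l^2 \<ge> 2^2" using l2 by (intro power_mono) auto
    hence "4 * l^2 \<ge> 16" by simp
    hence "3 / (4 * l^2) \<le> 3/16" by (intro divide_left_mono) auto
    thus ?thesis using hc' by linarith
  qed
  define x where "x = 2 * c / (1 - c)"
  have x0: "0 \<le> x" unfolding x_def using hc0 c16 by simp
  have nc: "real n * c \<le> 3/16"
  proof -
    have "real n * c \<le> real n * (3 / (4 * l^2))" using hc' by (intro mult_left_mono) auto
    also have "\<dots> = 3 * real n / (4 * l^2)" by simp
    also have "\<dots> \<le> 3/16"
    proof -
      have "16 * (3 * real n) \<le> 3 * (4 * l^2)" proof -
        have "0 \<le> (real n - 1)^2" by simp
        thus ?thesis using ln by (simp add: power2_eq_square algebra_simps)
      qed
      thus ?thesis using l2 by (simp add: divide_le_eq)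
    qed
    finally show ?thesis .
  qed
  have nx: "real n * x < 1/2"
  proof -
    have "real n * x = 2 * (real n * c) / (1 - c)" unfolding x_def by simp
    also have "\<dots> \<le> 2 * (3/16) / (1 - c)" using nc c16 by (intro divide_right_mono) auto
    also have "\<dots> \<le> 2 * (3/16) / (13/16)" using c16 by (intro divide_left_mono) auto
    finally show ?thesis by simp
  qed
  have R: "(1 + x)^n < 2"
  proof -
    have "(1+x)^n \<le> exp (real n * x)" using x0 by (intro pow_exp) simp
    also have "\<dots> < exp (1/2)" using nx by simp
    also have "\<dots> \<le> 2" by (rule exp_half_le2)
    finally show ?thesis .
  qed
  have pos: "0 < 1 + b - c" using hb c16 by simp
  have key: "1 + b + c \<le> (1 + b - c) * (1 + x)"
  proof -
    have "x * (1 - c) = 2 * c" unfolding x_def using c16 by simp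
    moreover have "x * (1 - c) \<le> x * (1 + b - c)" using x0 hb by (intro mult_left_mono) auto
    ultimately show ?thesis by (simp add: algebra_simps)
  qed
  have A1: "a2^n \<le> (1 + b + c)^n" using ha0 ha by (intro power_mono) auto
  have A2: "(1 + b + c)^n \<le> (1 + b - c)^n * (1 + x)^n"
    unfolding power_mult_distrib[symmetric] using key hb hc0 by (intro power_mono) auto
  have P: "0 < (1 + b - c)^n" using pos by simp
  have A3: "(1 + b + c)^n < 2 * (1 + b - c)^n"
  proof -
    have "(1 + b - c)^n * (1 + x)^n < (1 + b - c)^n * 2" using P R by simp
    thus ?thesis using A2 by simp
  qed
  have hlow': "b * (1 + b - c)^n \<le> phi2" using hlow unfolding n_def .
  have C2: "a2^n * b < 2 * phi2"
  proof (cases "b = 0")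
    case True thus ?thesis using hp1 by simp
  next
    case False
    hence "b > 0" using hb by simp
    hence "a2^n * b < 2 * (1 + b - c)^n * b" using A1 A3 by (intro mult_strict_right_mono) auto
    also have "\<dots> \<le> 2 * phi2" using hlow' by (simp add: algebra_simps)
    finally show ?thesis .
  qed
  have C1: "a2^n < l * phi2"
  proof (cases "l * b \<ge> 2")
    case True
    have "2 * (1 + b - c)^n \<le> l * b * (1 + b - c)^n" using True P by (intro mult_right_mono) auto
    also have "\<dots> \<le> l * phi2" using hlow' l2 by (simp add: mult.assoc)
    finally show ?thesis using A1 A3 by linarith
  next
    case False
    hence bl: "b < 2 / l" using l2 by (simp add: less_divide_eq mult.commute)
    have "(b + c) * real n < 2"
    proof -
      have "(b + c) * real n \<le> (2 / l + 3 / (4 * l^2)) * real n" using bl hc' by (intro mult_right_mono) auto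
      also have "\<dots> < 2"
      proof -
        have rn: "real n = l - 1" using ln by simp
        have "(2 / l + 3 / (4 * l^2)) * real n = (8 * l + 3) * (l - 1) / (4 * l^2)" unfolding rn using l2
          by (simp add: field_simps power2_eq_square)
        also have "\<dots> < 2" using l2 by (simp add: divide_less_eq power2_eq_square algebra_simps)
        finally show ?thesis .
      qed
      finally show ?thesis .
    qed
    hence e2: "exp (real n * (b+c)) < exp 2" by (simp add: mult.commute)
    have "(1 + (b + c))^n \<le> exp (real n * (b + c))" using hb hc0 by (intro pow_exp) simp
    with e2 have "(1 + (b + c))^n < exp 2" by linarith
    hence "(1 + b + c)^n < exp 2" by (simp add: add.assoc)
    thus ?thesis using A1 hpe unfolding l_def by linarith
  qed
  show ?thesis using C1 C2 unfolding n_def l_def by simp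
qed


fun chain :: "(nat \<Rightarrow> real^'n^'n) \<Rightarrow> nat \<Rightarrow> real^'n \<Rightarrow> nat \<Rightarrow> real^'n" where
  "chain W L y 0 = y"
| "chain W L y (Suc k) = transpose (W (L - k)) *v chain W L y k"

lemma chain_link: "k \<le> L \<Longrightarrow> transpose (prod_mats W L) *v y = transpose (prod_mats W (L - k)) *v chain W L y k"
proof (induction k)
  case 0 thus ?case by simp
next
  case (Suc k)
  hence IH: "transpose (prod_mats W L) *v y = transpose (prod_mats W (L - k)) *v chain W L y k" by simp
  have e: "L - k = Suc (L - Suc k)" using Suc.prems by simp
  have p: "prod_mats W (L-k) = W (L-k) ** prod_mats W (L - Suc k)" using e by (metis prod_mats.simps(2))
  show ?case
    by (simp only: IH p matrix_transpose_mul matrix_vector_mul_assoc[symmetric] chain.simps)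
qed

lemma quad_bound2: "spec_norm M \<le> e \<Longrightarrow> \<bar>inner x (M *v x)\<bar> \<le> e * (norm x)^2"
  using quad_bound[of x M] by (meson mult_right_mono order_trans zero_le_power2)

lemma quad_diff: "inner x ((A - B) *v x) = inner x (A *v x) - inner x (B *v (x::real^'n))"
  by (simp add: matrix_vector_mult_diff_rdistrib inner_diff_right)

lemma quad_add: "inner x ((A + B) *v x) = inner x (A *v x) + inner x (B *v (x::real^'n))"
  by (simp add: matrix_vector_mult_add_rdistrib inner_add_right)

lemma quad_mat1: "inner x (mat 1 *v x) = (norm (x::real^'n))^2"
  by (simp add: power2_norm_eq_inner)

lemma cs_lower: "inner u ((A::real^'n^'n) *v v) = s \<Longrightarrow> s \<le> norm u * norm (A *v v)"
  using norm_cauchy_schwarz[of u "A *v v"] by simp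

theorem lemma7:
  fixes W :: "nat \<Rightarrow> real^'n^'n" and L :: nat and \<delta> \<epsilon> :: real
  assumes hL: "L \<ge> 2"
    and hD: "\<And>l. 1 \<le> l \<Longrightarrow> l \<le> L - 2 \<Longrightarrow>
               spec_norm (transpose (W (l+1)) ** W (l+1) - W l ** transpose (W l)) \<le> \<delta>"
    and hE: "spec_norm (mat 1 + (transpose (W L) ** W L - W (L-1) ** transpose (W (L-1)))) \<le> \<epsilon>"
    and h\<delta>: "\<delta> \<le> 1 / (2 * real L ^ 3 *
               (max (max (spec_norm (prod_mats W L)) (exp 1 / sqrt (real L))) 1)\<^sup>2)"
    and h\<epsilon>: "\<epsilon> \<le> 1 / (4 * real L ^ 2)"
  shows "let \<alpha> = max (Max ((\<lambda>l. spec_norm (W l)) ` {1..L-1})) 1;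
             \<beta> = spec_norm (W L);
             \<phi> = max (max (spec_norm (prod_mats W L)) (exp 1 / sqrt (real L))) 1
         in \<alpha> ^ (2*(L-1)) < real L * \<phi>\<^sup>2 \<and> \<alpha> ^ (2*(L-1)) * \<beta>\<^sup>2 < 2 * \<phi>\<^sup>2"
proof -
  define \<phi> where "\<phi> = max (max (spec_norm (prod_mats W L)) (exp 1 / sqrt (real L))) 1"
  define \<beta> where "\<beta> = spec_norm (W L)"
  define \<alpha> where "\<alpha> = max (Max ((\<lambda>l. spec_norm (W l)) ` {1..L-1})) 1"
  define b where "b = \<beta>^2"
  define dp where "dp = max \<delta> 0"
  define c where "c = \<epsilon> + real L * dp"
  have Lpos: "real L \<ge> 2" using hL by simp
  have \<phi>1: "\<phi> \<ge> 1" unfolding \<phi>_def by simp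
  have \<beta>0: "\<beta> \<ge> 0" unfolding \<beta>_def by (rule sn_nonneg)
  have b0: "b \<ge> 0" unfolding b_def by simp
  have \<epsilon>0: "\<epsilon> \<ge> 0" using hE sn_nonneg order_trans by blast
  have dp0: "dp \<ge> 0" unfolding dp_def by simp
  have dpb: "dp \<le> 1 / (2 * real L ^ 3 * \<phi>^2)"
    using h\<delta> Lpos \<phi>1 unfolding dp_def \<phi>_def[symmetric] by simp
  have c0: "c \<ge> 0" unfolding c_def using \<epsilon>0 dp0 by simp
  have cb: "c \<le> 3 / (4 * real L ^ 2)"
  proof -
    have "real L * dp \<le> real L * (1 / (2 * real L ^ 3 * \<phi>^2))" using dpb Lpos by (intro mult_left_mono) auto
    also have "\<dots> = 1 / (2 * real L ^ 2 * \<phi>^2)" using Lpos by (simp add: power3_eq_cube power2_eq_square)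
    also have "\<dots> \<le> 1 / (2 * real L ^ 2)"
    proof -
      have "\<phi>^2 \<ge> 1" using \<phi>1 by simp
      hence "2 * real L ^ 2 \<le> 2 * real L ^ 2 * \<phi>^2" using Lpos by simp
      moreover have "0 < (2 * real L ^ 2) * (2 * real L ^ 2 * \<phi>^2)" using Lpos \<phi>1 by simp
      ultimately show ?thesis by (intro divide_left_mono) auto
    qed
    finally have "real L * dp \<le> 1 / (2 * real L ^ 2)" .
    thus ?thesis unfolding c_def using h\<epsilon> by (simp add: field_simps)
  qed
  have pe: "exp 2 \<le> real L * \<phi>^2"
  proof -
    have "exp 1 / sqrt (real L) \<le> \<phi>" unfolding \<phi>_def by simp
    hence "(exp 1 / sqrt (real L))^2 \<le> \<phi>^2" by (intro power_mono) auto
    moreover have "(exp 1 / sqrt (real L))^2 = exp 2 / real L"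
      using Lpos by (simp add: power_divide exp_double[symmetric])
    ultimately show ?thesis using Lpos by (simp add: divide_le_eq mult.commute)
  qed
  have U: "\<And>k. k \<le> L - 2 \<Longrightarrow> (spec_norm (W (L - 1 - k)))^2 \<le> 1 + b + \<epsilon> + real k * dp"
  proof -
    fix k show "k \<le> L - 2 \<Longrightarrow> (spec_norm (W (L - 1 - k)))^2 \<le> 1 + b + \<epsilon> + real k * dp"
    proof (induction k)
      case 0
      obtain x :: "real^'n" where x1: "norm x = 1" and xm: "norm (transpose (W (L-1)) *v x) = spec_norm (transpose (W (L-1)))"
        using sn_attained by blast
      let ?M = "mat 1 + (transpose (W L) ** W L - W (L-1) ** transpose (W (L-1)))"
      have "inner x (?M *v x) = 1 + (norm (W L *v x))^2 - (norm (transpose (W (L-1)) *v x))^2"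
        by (simp only: quad_add quad_diff quad_mat1 quad_TA quad_AT x1) simp
      moreover have "\<bar>inner x (?M *v x)\<bar> \<le> \<epsilon>" using quad_bound[of x ?M] hE x1 by simp
      moreover have "(norm (W L *v x))^2 \<le> b"
        using sn_bound[of "W L" x] x1 norm_ge_zero unfolding b_def \<beta>_def by (intro power_mono) auto
      moreover have "spec_norm (W (L-1)) = norm (transpose (W (L-1)) *v x)" using xm sn_transp by metis
      ultimately show ?case by (simp add: abs_le_iff)
    next
      case (Suc k)
      define l where "l = L - 2 - k"
      have l1: "1 \<le> l" "l \<le> L - 2" using Suc.prems unfolding l_def by auto
      have el: "L - 1 - Suc k = l" "L - 1 - k = l + 1" using Suc.prems unfolding l_def by auto
      have IH: "(spec_norm (W (l+1)))^2 \<le> 1 + b + \<epsilon> + real k * dp" using Suc el by simp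
      obtain x :: "real^'n" where x1: "norm x = 1" and xm: "norm (transpose (W l) *v x) = spec_norm (transpose (W l))"
        using sn_attained by blast
      let ?M = "transpose (W (l+1)) ** W (l+1) - W l ** transpose (W l)"
      have "inner x (?M *v x) = (norm (W (l+1) *v x))^2 - (norm (transpose (W l) *v x))^2"
        by (simp only: quad_diff quad_TA quad_AT)
      moreover have "\<bar>inner x (?M *v x)\<bar> \<le> \<delta>" using quad_bound[of x ?M] hD[OF l1] x1 by simp
      moreover have "(norm (W (l+1) *v x))^2 \<le> (spec_norm (W (l+1)))^2"
        using sn_bound[of "W (l+1)" x] x1 norm_ge_zero by (intro power_mono) auto
      moreover have "spec_norm (W l) = norm (transpose (W l) *v x)" using xm sn_transp by metis
      ultimately have "(spec_norm (W l))^2 \<le> (spec_norm (W (l+1)))^2 + \<delta>" by (simp add: abs_le_iff)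
      moreover have "\<delta> \<le> dp" unfolding dp_def by simp
      ultimately show ?case using IH unfolding el by (simp add: algebra_simps)
    qed
  qed
  have a2b: "\<alpha>^2 \<le> 1 + b + c"
  proof -
    have fin: "finite ((\<lambda>l. spec_norm (W l)) ` {1..L-1})" by simp
    have ne: "(\<lambda>l. spec_norm (W l)) ` {1..L-1} \<noteq> {}" using hL by simp
    obtain l where l: "l \<in> {1..L-1}" and lm: "Max ((\<lambda>l. spec_norm (W l)) ` {1..L-1}) = spec_norm (W l)"
      using Max_in[OF fin ne] by auto
    define k where "k = L - 1 - l"
    have k: "k \<le> L - 2" "L - 1 - k = l" using l unfolding k_def by auto
    have "(spec_norm (W l))^2 \<le> 1 + b + \<epsilon> + real k * dp" using U[OF k(1)] k(2) by simp
    also have "\<dots> \<le> 1 + b + c" unfolding c_def using dp0 k(1) by (simp add: mult_right_mono)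
    finally have m: "(spec_norm (W l))^2 \<le> 1 + b + c" .
    show ?thesis
    proof (cases "spec_norm (W l) \<le> 1")
      case True
      hence "\<alpha> = 1" unfolding \<alpha>_def lm by simp
      thus ?thesis using b0 c0 by simp
    next
      case False
      hence "\<alpha> = spec_norm (W l)" unfolding \<alpha>_def lm by simp
      thus ?thesis using m by simp
    qed
  qed
  have LB: "b * (1 + b - c)^(L-1) \<le> \<phi>^2"
  proof (cases "b = 0")
    case True thus ?thesis by simp
  next
    case False
    hence bpos: "b > 0" using b0 by simp
    obtain y :: "real^'n" where y1: "norm y = 1" and ym: "norm (transpose (W L) *v y) = spec_norm (transpose (W L))"
      using sn_attained by blast
    define N where "N k = (norm (chain W L y k))^2" for k
    have N0: "N 0 = 1" unfolding N_def using y1 by simp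
    have N1: "N 1 = b" unfolding N_def b_def \<beta>_def using ym sn_transp[of "W L"] by (simp del: transpose_matrix_vector)
    have Nnn: "\<And>k. N k \<ge> 0" unfolding N_def by simp
    have step1: "N 2 \<ge> N 1 * (1 + N 1 - \<epsilon>)"
    proof -
      let ?h = "chain W L y 1"
      have h2: "chain W L y 2 = transpose (W (L-1)) *v ?h" by (simp add: numeral_2_eq_2)
      have h1: "?h = transpose (W L) *v y" by simp
      let ?M = "mat 1 + (transpose (W L) ** W L - W (L-1) ** transpose (W (L-1)))"
      have "inner ?h (?M *v ?h) = N 1 + (norm (W L *v ?h))^2 - N 2"
        unfolding N_def h2 by (simp only: quad_add quad_diff quad_mat1 quad_TA quad_AT)
      moreover have "\<bar>inner ?h (?M *v ?h)\<bar> \<le> \<epsilon> * N 1" using quad_bound2[OF hE, of ?h]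
        unfolding N_def by simp
      moreover have "N 1 \<le> norm (W L *v ?h)"
        using cs_lower[of y "W L" ?h "N 1"] y1 unfolding N_def
        by (simp add: h1 dot_transp power2_norm_eq_inner)
      hence "(N 1)^2 \<le> (norm (W L *v ?h))^2" using Nnn by (intro power_mono) auto
      ultimately show ?thesis by (simp add: algebra_simps power2_eq_square)
    qed
    have stepk: "\<And>k. 2 \<le> k \<Longrightarrow> k \<le> L - 1 \<Longrightarrow> N (k+1) * N (k-1) \<ge> (N k)^2 - \<delta> * N k * N (k-1)"
    proof -
      fix k assume k2: "2 \<le> k" and kL: "k \<le> L - 1"
      define l where "l = L - k"
      have l1: "1 \<le> l" "l \<le> L - 2" using k2 kL unfolding l_def by auto
      obtain j where j: "k = Suc j" using k2 by (cases k) auto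
      have hk1: "chain W L y (k+1) = transpose (W l) *v chain W L y k" unfolding l_def by simp
      have hk: "chain W L y k = transpose (W (l+1)) *v chain W L y (k-1)"
        using j kL unfolding l_def by (simp add: Suc_diff_Suc)
      let ?h = "chain W L y k"
      let ?g = "chain W L y (k-1)"
      let ?M = "transpose (W (l+1)) ** W (l+1) - W l ** transpose (W l)"
      have "inner ?h (?M *v ?h) = (norm (W (l+1) *v ?h))^2 - N (k+1)"
        unfolding N_def hk1 by (simp only: quad_diff quad_TA quad_AT)
      moreover have "\<bar>inner ?h (?M *v ?h)\<bar> \<le> \<delta> * N k" using quad_bound2[OF hD[OF l1], of ?h]
        unfolding N_def by simp
      ultimately have A: "N (k+1) \<ge> (norm (W (l+1) *v ?h))^2 - \<delta> * N k" by simp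
      have "N k \<le> norm ?g * norm (W (l+1) *v ?h)"
        using cs_lower[of ?g "W (l+1)" ?h "N k"] unfolding N_def
        by (metis dot_transp hk power2_norm_eq_inner)
      hence "(N k)^2 \<le> (norm ?g * norm (W (l+1) *v ?h))^2" using Nnn by (intro power_mono) auto
      hence B: "(N k)^2 \<le> N (k-1) * (norm (W (l+1) *v ?h))^2" unfolding N_def by (simp add: power_mult_distrib)
      have "N (k+1) * N (k-1) \<ge> ((norm (W (l+1) *v ?h))^2 - \<delta> * N k) * N (k-1)"
        using A Nnn by (intro mult_right_mono) auto
      thus "N (k+1) * N (k-1) \<ge> (N k)^2 - \<delta> * N k * N (k-1)" using B by (simp add: algebra_simps)
    qed
    have cpos: "0 < 1 + b - c"
    proof -
      have "c \<le> 3 / (4 * real L ^ 2)" by (rule cb)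
      also have "\<dots> \<le> 3/16"
      proof -
        have "real L ^ 2 \<ge> 2^2" using Lpos by (intro power_mono) auto
        thus ?thesis using hL by (intro divide_left_mono) auto
      qed
      finally show ?thesis using b0 by simp
    qed
    define \<rho> where "\<rho> k = 1 + b - \<epsilon> - real (k - 1) * dp" for k
    have \<rho>c: "\<And>k. k \<le> L \<Longrightarrow> \<rho> k \<ge> 1 + b - c"
    proof -
      fix k assume "k \<le> L"
      hence "real (k-1) * dp \<le> real L * dp" using dp0 by (intro mult_right_mono) auto
      thus "\<rho> k \<ge> 1 + b - c" unfolding \<rho>_def c_def by simp
    qed
    have P: "\<And>k. 1 \<le> k \<Longrightarrow> k \<le> L - 1 \<Longrightarrow> N k > 0 \<and> N (k+1) \<ge> \<rho> k * N k"
    proof -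
      fix k show "1 \<le> k \<Longrightarrow> k \<le> L - 1 \<Longrightarrow> N k > 0 \<and> N (k+1) \<ge> \<rho> k * N k"
      proof (induction k)
        case 0 thus ?case by simp
      next
        case (Suc k)
        show ?case
        proof (cases "k = 0")
          case True
          thus ?thesis using step1 N1 bpos unfolding \<rho>_def by (simp add: numeral_2_eq_2 algebra_simps)
        next
          case False
          hence IH: "N k > 0" "N (k+1) \<ge> \<rho> k * N k" using Suc by auto
          have "k \<le> L" using Suc.prems by simp
          hence rk: "\<rho> k > 0" using \<rho>c[of k] cpos by simp
          have Nk1: "N (Suc k) > 0" using IH rk by (metis Suc_eq_plus1 mult_pos_pos order_less_le_trans)
          have S: "N (k+2) * N k \<ge> (N (k+1))^2 - \<delta> * N (k+1) * N k"
            using stepk[of "k+1"] Suc.prems False by simp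
          have "(N (k+1))^2 \<ge> \<rho> k * N k * N (k+1)"
            using IH(2) Nk1 by (simp add: power2_eq_square mult_right_mono)
          moreover have "\<delta> * N (k+1) * N k \<le> dp * N (k+1) * N k"
            using Nk1 IH(1) unfolding dp_def by (intro mult_right_mono) auto
          ultimately have "N (k+2) * N k \<ge> ((\<rho> k - dp) * N (k+1)) * N k" using S
            by (simp add: algebra_simps)
          hence "N (k+2) \<ge> (\<rho> k - dp) * N (k+1)" using IH(1) by simp
          moreover have "\<rho> (Suc k) = \<rho> k - dp" unfolding \<rho>_def using False
            by (simp add: algebra_simps of_nat_diff)
          ultimately show ?thesis using Nk1 by simp
        qed
      qed
    qed
    have Q: "\<And>k. 1 \<le> k \<Longrightarrow> k \<le> L \<Longrightarrow> N k \<ge> b * (1 + b - c)^(k-1)"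
    proof -
      fix k show "1 \<le> k \<Longrightarrow> k \<le> L \<Longrightarrow> N k \<ge> b * (1 + b - c)^(k-1)"
      proof (induction k)
        case 0 thus ?case by simp
      next
        case (Suc k)
        show ?case
        proof (cases "k = 0")
          case True thus ?thesis using N1 by simp
        next
          case False
          hence IH: "N k \<ge> b * (1 + b - c)^(k-1)" using Suc by auto
          have Pk: "N (k+1) \<ge> \<rho> k * N k" using P[of k] Suc.prems False by simp
          have "\<rho> k * N k \<ge> (1 + b - c) * N k" using \<rho>c[of k] Suc.prems Nnn by (intro mult_right_mono) auto
          moreover have "(1 + b - c) * N k \<ge> (1 + b - c) * (b * (1 + b - c)^(k-1))"
            using IH cpos by (intro mult_left_mono) auto
          moreover have "(1 + b - c) * (b * (1 + b - c)^(k-1)) = b * (1 + b - c)^k"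
            using False by (cases k) (auto simp: algebra_simps)
          ultimately have "b * (1 + b - c)^k \<le> N (k+1)" using Pk by linarith
          thus ?thesis by simp
        qed
      qed
    qed
    have "N L \<ge> b * (1 + b - c)^(L-1)" using Q[of L] hL by simp
    moreover have "N L \<le> \<phi>^2"
    proof -
      have "chain W L y L = transpose (prod_mats W L) *v y" using chain_link[of L L W y] by simp
      hence "norm (chain W L y L) \<le> spec_norm (prod_mats W L)"
        using sn_bound[of "transpose (prod_mats W L)" y] y1 sn_transp[of "prod_mats W L"] by (simp del: transpose_matrix_vector)
      also have "\<dots> \<le> \<phi>" unfolding \<phi>_def by simp
      finally show ?thesis unfolding N_def by (intro power_mono) auto
    qed
    ultimately show ?thesis by simp
  qed
  have \<alpha>0: "\<alpha> \<ge> 0" unfolding \<alpha>_def by simp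
  have res: "(\<alpha>^2)^(L-1) < real L * \<phi>^2 \<and> (\<alpha>^2)^(L-1) * b < 2 * \<phi>^2"
    by (rule scalar_part[OF hL b0 c0 cb _ pe _ a2b LB]) (use \<phi>1 in simp, simp)
  show ?thesis unfolding Let_def \<alpha>_def[symmetric] \<beta>_def[symmetric] \<phi>_def[symmetric]
    using res unfolding b_def by (simp add: power_mult)
qed

end
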